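(* Let $k\ge 1$ be an integer and $p>0$ a budget. For $j=1,\dots,k$ let $n_j>0$ (number of training samples of the $j$-th low-fidelity model) with $p-\sum_{j=1}^k n_j>0$, and let $\rho_j(n_j)\in[-1,1]$ and $w_j(n_j)>0$ be given numbers (correlation coefficient with the high-fidelity model and evaluation cost of the $j$-th low-fidelity model), with the conventions $n_0=0$, $\rho_0=1$, $w_0=1$, $\rho_{k+1}=0$, and assume $1=|\rho_0|>|\rho_1(n_1)|>\dots>|\rho_k(n_k)|$. Let $\sigma_0^2>0$. Suppose that for each $j=1,\dots,k$ there are constants $c_{a,j},c_{c,j}>0$, a positive, decreasing, at least twice continuously differentiable $r_{a,j}:(0,\infty)\to(0,\infty)$ and a positive, increasing, at least twice continuously differentiable $r_{c,j}:(0,\infty)\to(0,\infty)$ with $$1-\rho_j^2(n_j)\le c_{a,j}r_{a,j}(n_j),\qquad w_j(n_j)\le c_{c,j}r_{c,j}(n_j).$$ Define $$\mathrm{MSE}=\frac{\sigma_0^2}{p-\sum_{i=1}^k n_i}\left(\sum_{j=0}^k\sqrt{w_j(n_j)\big(\rho_j^2(n_j)-\rho_{j+1}^2(n_{j+1})\big)}\right)^2.$$ Then $$\mathrm{MSE}\le \frac{(k+1)\sigma_0^2}{p_{k-1}-n_k}\Big(\kappa_{k-1}+w_{k-1}(n_{k-1})\,c_{a,k}\,r_{a,k}(n_k)+c_{c,k}\,r_{c,k}(n_k)\Big),$$ where $$p_{k-1}=p-\sum_{j=1}^{k-1}n_j\ (p_0=p),\qquad \kappa_{k-1}=\sum_{j=0}^{k-2}w_j(n_j)\big(1-\rho_{j+1}^2(n_{j+1})\big)\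 (\kappa_0=0).$$
   Context: The quantity $\mathrm{MSE}$ is the mean-squared error of the context-aware multi-fidelity Monte Carlo estimator of $\mathbb{E}[f^{(0)}(\boldsymbol\Theta)]$ built from a high-fidelity model $f^{(0)}$ (output variance $\sigma_0^2$, cost $1$) and $k$ low-fidelity models $f^{(j)}_{n_j}$ trained with $n_j$ high-fidelity evaluations each, after optimal allocation of the remaining budget $p-\sum n_i$ to sampling. *)

theory Defs
  imports "HOL-Analysis.Analysis"
begin

definition twice_cont_diff_on :: "real set \<Rightarrow> (real \<Rightarrow> real) \<Rightarrow> bool" where
  "twice_cont_diff_on S f \<longleftrightarrow>
     (\<exists>f' f''. (\<forall>x\<in>S. (f has_real_derivative f' x) (at x)) \<and>
               (\<forall>x\<in>S. (f' has_real_derivative f'' x) (at x)) \<and>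
               continuous_on S f'')"

text \<open>Mean-squared error of the context-aware MFMC estimator after optimal allocation.
  rho j and w j stand for rho_j(n_j) and w_j(n_j); the conventions rho 0 = 1, w 0 = 1,
  rho (k+1) = 0 are imposed as hypotheses in the theorem.\<close>
definition MSE :: "real \<Rightarrow> real \<Rightarrow> nat \<Rightarrow> (nat \<Rightarrow> nat) \<Rightarrow> (nat \<Rightarrow> real) \<Rightarrow> (nat \<Rightarrow> real) \<Rightarrow> real" where
  "MSE \<sigma>2 p k n \<rho> w =
     \<sigma>2 / (p - (\<Sum>i=1..k. real (n i))) *
     (\<Sum>j=0..k. sqrt (w j * ((\<rho> j)\<^sup>2 - (\<rho> (j+1))\<^sup>2)))\<^sup>2"

end

theory Submission
  imports Defs
begin

theorem lemma1:
  fixes k :: nat and p \<sigma>2 :: real and n :: "nat \<Rightarrow> nat"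
    and \<rho> w c_a c_c :: "nat \<Rightarrow> real" and r_a r_c :: "nat \<Rightarrow> real \<Rightarrow> real"
  assumes k: "k \<ge> 1"
    and p: "p > 0"
    and n_pos: "\<forall>j\<in>{1..k}. n j > 0"
    and budget: "p - (\<Sum>j=1..k. real (n j)) > 0"
    and n0: "n 0 = 0" and rho0: "\<rho> 0 = 1" and w0: "w 0 = 1" and rhok1: "\<rho> (k+1) = 0"
    and rho_range: "\<forall>j\<in>{1..k}. -1 \<le> \<rho> j \<and> \<rho> j \<le> 1"
    and w_pos: "\<forall>j\<in>{1..k}. w j > 0"
    and rho_dec: "\<forall>j<k. \<bar>\<rho> j\<bar> > \<bar>\<rho> (j+1)\<bar>"
    and sigma: "\<sigma>2 > 0"
    and c_pos: "\<forall>j\<in>{1..k}. c_a j > 0 \<and> c_c j > 0"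
    and ra_pos: "\<forall>j\<in>{1..k}. \<forall>x>0. r_a j x > 0"
    and ra_dec: "\<forall>j\<in>{1..k}. \<forall>x y. 0 < x \<longrightarrow> x \<le> y \<longrightarrow> r_a j y \<le> r_a j x"
    and ra_C2: "\<forall>j\<in>{1..k}. twice_cont_diff_on {0<..} (r_a j)"
    and rc_pos: "\<forall>j\<in>{1..k}. \<forall>x>0. r_c j x > 0"
    and rc_inc: "\<forall>j\<in>{1..k}. \<forall>x y. 0 < x \<longrightarrow> x \<le> y \<longrightarrow> r_c j x \<le> r_c j y"
    and rc_C2: "\<forall>j\<in>{1..k}. twice_cont_diff_on {0<..} (r_c j)"
    and acc: "\<forall>j\<in>{1..k}. 1 - (\<rho> j)\<^sup>2 \<le> c_a j * r_a j (real (n j))"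
    and cost: "\<forall>j\<in>{1..k}. w j \<le> c_c j * r_c j (real (n j))"
  shows "MSE \<sigma>2 p k n \<rho> w \<le>
    real (k+1) * \<sigma>2 / ((p - (\<Sum>j=1..k-1. real (n j))) - real (n k)) *
      ((\<Sum>j=0..<k-1. w j * (1 - (\<rho> (j+1))\<^sup>2)) + w (k-1) * c_a k * r_a k (real (n k))
        + c_c k * r_c k (real (n k)))"
proof -
  obtain m where km: "k = Suc m" using k by (cases k) auto
  define a where "a j = w j * ((\<rho> j)\<^sup>2 - (\<rho> (j+1))\<^sup>2)" for j
  have wpos: "w j > 0" if "j \<le> k" for j
    using w_pos w0 that by (cases "j = 0") auto
  have rsq: "(\<rho> j)\<^sup>2 \<le> 1" if "j \<le> k" for j
  proof (cases "j = 0")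
    case True then show ?thesis using rho0 by simp
  next
    case False
    then have "-1 \<le> \<rho> j \<and> \<rho> j \<le> 1" using rho_range that by auto
    then have "\<bar>\<rho> j\<bar> \<le> 1" by auto
    then show ?thesis by (simp add: abs_square_le_1)
  qed
  have rdec: "(\<rho> (j+1))\<^sup>2 \<le> (\<rho> j)\<^sup>2" if "j \<le> k" for j
  proof (cases "j = k")
    case True then show ?thesis using rhok1 by simp
  next
    case False
    then have "j < k" using that by simp
    then have "\<bar>\<rho> (j+1)\<bar> \<le> \<bar>\<rho> j\<bar>" using rho_dec less_imp_le by blast
    then show ?thesis by (metis abs_ge_zero power2_abs power_mono)
  qed
  have anneg: "a j \<ge> 0" if "j \<le> k" for j
    unfolding a_def using wpos[OF that] rdec[OF that] by simp
  have sq: "(\<Sum>j=0..k. sqrt (a j))\<^sup>2 \<le> (\<Sum>j=0..k. a j) * real (k+1)"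
  proof -
    have "(\<Sum>j=0..k. sqrt (a j))\<^sup>2 \<le> (\<Sum>j=0..k. (sqrt (a j))\<^sup>2) * card {0..k}"
      by (rule sum_squared_le_sum_of_squares)
    also have "(\<Sum>j=0..k. (sqrt (a j))\<^sup>2) = (\<Sum>j=0..k. a j)"
      by (rule sum.cong) (auto simp: anneg)
    finally show ?thesis by simp
  qed
  have s1: "(\<Sum>j=0..<m. a j) \<le> (\<Sum>j=0..<m. w j * (1 - (\<rho> (j+1))\<^sup>2))"
  proof (rule sum_mono)
    fix j assume "j \<in> {0..<m}"
    then have "j \<le> k" using km by auto
    then show "a j \<le> w j * (1 - (\<rho> (j+1))\<^sup>2)"
      unfolding a_def using wpos[of j] rsq[of j] by (intro mult_left_mono) auto
  qed
  have s2: "a m \<le> w m * c_a k * r_a k (real (n k))"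
  proof -
    have "a m \<le> w m * (1 - (\<rho> k)\<^sup>2)"
      unfolding a_def using wpos[of m] rsq[of m] km by (intro mult_left_mono) auto
    also have "\<dots> \<le> w m * (c_a k * r_a k (real (n k)))"
      using acc k wpos[of m] km by (intro mult_left_mono) auto
    finally show ?thesis by simp
  qed
  have s3: "a k \<le> c_c k * r_c k (real (n k))"
  proof -
    have "a k = w k * (\<rho> k)\<^sup>2" unfolding a_def using rhok1 by simp
    also have "\<dots> \<le> w k * 1" using wpos[of k] rsq[of k] by (intro mult_left_mono) auto
    also have "\<dots> \<le> c_c k * r_c k (real (n k))" using cost k by auto
    finally show ?thesis .
  qed
  have sumsplit: "(\<Sum>j=0..k. a j) = (\<Sum>j=0..<m. a j) + a m + a k"
    using km by (simp add: atLeast0AtMost atLeast0LessThan lessThan_Suc_atMost[symmetric])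
  have B: "(\<Sum>j=0..k. a j) \<le> (\<Sum>j=0..<k-1. w j * (1 - (\<rho> (j+1))\<^sup>2)) + w (k-1) * c_a k * r_a k (real (n k))
        + c_c k * r_c k (real (n k))"
    using sumsplit s1 s2 s3 km by simp
  define D where "D = p - (\<Sum>i=1..k. real (n i))"
  have Deq: "(p - (\<Sum>j=1..k-1. real (n j))) - real (n k) = D"
    unfolding D_def using km by simp
  have Dpos: "D > 0" using budget D_def by simp
  have "MSE \<sigma>2 p k n \<rho> w = \<sigma>2 / D * (\<Sum>j=0..k. sqrt (a j))\<^sup>2"
    unfolding MSE_def D_def a_def by simp
  also have "\<dots> \<le> \<sigma>2 / D * ((\<Sum>j=0..k. a j) * real (k+1))"
    using sq sigma Dpos by (intro mult_left_mono) auto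
  also have "\<dots> \<le> \<sigma>2 / D * (((\<Sum>j=0..<k-1. w j * (1 - (\<rho> (j+1))\<^sup>2)) + w (k-1) * c_a k * r_a k (real (n k))
        + c_c k * r_c k (real (n k))) * real (k+1))"
    using B sigma Dpos by (intro mult_left_mono) auto
  also have "\<dots> = real (k+1) * \<sigma>2 / ((p - (\<Sum>j=1..k-1. real (n j))) - real (n k)) *
      ((\<Sum>j=0..<k-1. w j * (1 - (\<rho> (j+1))\<^sup>2)) + w (k-1) * c_a k * r_a k (real (n k))
        + c_c k * r_c k (real (n k)))"
    unfolding Deq by simp
  finally show ?thesis .
qed

end
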